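(* Let $g_0,g_\infty\in\mathbb C$, $g_1=-g_0-g_\infty$, and let $G(t,z)$ be the EGF of the GKP triangle $\left[\begin{array}{cc|c}-\tfrac12,&1&g_0\\ 1,&-1&g_\infty\end{array}\right]$ (the case $(r_0,r_1,r_\infty)=(\tfrac12,\tfrac12,0)$). Put $t_+=t$, $t_-=1-t$ and $$s_\pm=\Bigl[\sqrt{t_\pm}\cos\Bigl(\tfrac z2\sqrt{t_+t_-}\Bigr)\pm\sqrt{t_\mp}\sin\Bigl(\tfrac z2\sqrt{t_+t_-}\Bigr)\Bigr]^2 .$$ Then $s_++s_-=1$, the quotients $s_+/t_+$ and $s_-/t_-$ (after expanding the squares) are analytic at $(0,0)$ and equal $1$ at $z=0$, and near $(0,0)$ $$G(t,z)=\Bigl(\frac{s_+}{t_+}\Bigr)^{g_0}\Bigl(\frac{s_-}{t_-}\Bigr)^{g_1}$$ with principal branches.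
   Context: GKP triangle: for complex parameters $\alpha,\beta,\gamma,\alpha',\beta',\gamma'$, the array $T_{n,k}=\left[\begin{array}{cc|c}\alpha,&\beta&\gamma\\ \alpha',&\beta'&\gamma'\end{array}\right]_{n,k}$ is defined by $T_{0,0}=1$, $T_{n,k}=0$ if $n<0$, $k<0$ or $k>n$, and $T_{n+1,k+1}=[\alpha n+\beta(k+1)+\gamma]T_{n,k+1}+[\alpha' n+\beta' k+\gamma']T_{n,k}$ for $n\ge0$, $k\in\mathbb Z$; its EGF is $G(t,z)=\sum_{n\ge0}\sum_{k=0}^nT_{n,k}t^kz^n/n!$. *)

theory Defs
  imports "HOL-Analysis.Analysis"
begin

text \<open>GKP triangle [alpha, beta | gamma ; alpha', beta' | gamma'], indexed by n, k :: nat.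
  Entries with k < 0 vanish, so the case k+1 = 0 of the recurrence reduces to the
  first term only.\<close>
fun gkp :: "complex \<Rightarrow> complex \<Rightarrow> complex \<Rightarrow> complex \<Rightarrow> complex \<Rightarrow> complex \<Rightarrow> nat \<Rightarrow> nat \<Rightarrow> complex" where
  "gkp a b c a' b' c' 0 k = (if k = 0 then 1 else 0)"
| "gkp a b c a' b' c' (Suc n) 0 = (a * of_nat n + c) * gkp a b c a' b' c' n 0"
| "gkp a b c a' b' c' (Suc n) (Suc k) =
     (a * of_nat n + b * of_nat (Suc k) + c) * gkp a b c a' b' c' n (Suc k)
   + (a' * of_nat n + b' * of_nat k + c') * gkp a b c a' b' c' n k"

definition analytic2_at :: "(complex \<Rightarrow> complex \<Rightarrow> complex) \<Rightarrow> complex \<Rightarrow> complex \<Rightarrow> bool" where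
  "analytic2_at f a b \<longleftrightarrow> (\<exists>r>0. \<exists>c :: nat \<Rightarrow> nat \<Rightarrow> complex. \<forall>t z.
      cmod (t - a) < r \<and> cmod (z - b) < r \<longrightarrow>
      ((\<lambda>(n, k). c n k * (t - a) ^ k * (z - b) ^ n) has_sum f t z) UNIV)"

text \<open>w = (z/2) sqrt(t_+ t_-), with sqrt(t_+ t_-) := sqrt(t_+) sqrt(t_-) (consistent branches).\<close>
definition gkp_w :: "complex \<Rightarrow> complex \<Rightarrow> complex" where
  "gkp_w t z = z / 2 * (csqrt t * csqrt (1 - t))"

definition s_plus :: "complex \<Rightarrow> complex \<Rightarrow> complex" where
  "s_plus t z = (csqrt t * cos (gkp_w t z) + csqrt (1 - t) * sin (gkp_w t z)) ^ 2"

definition s_minus :: "complex \<Rightarrow> complex \<Rightarrow> complex" where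
  "s_minus t z = (csqrt (1 - t) * cos (gkp_w t z) - csqrt t * sin (gkp_w t z)) ^ 2"

end

theory Submission
  imports Defs
begin

definition pn :: "complex poly \<Rightarrow> real" where
  "pn p = (\<Sum>k\<le>degree p. cmod (coeff p k))"

lemma pn_ge: "degree p \<le> N \<Longrightarrow> pn p = (\<Sum>k\<le>N. cmod (coeff p k))"
  unfolding pn_def
  by (rule sum.mono_neutral_left) (auto simp: coeff_eq_0)

lemma pn_nonneg: "pn p \<ge> 0"
  unfolding pn_def by (auto intro: sum_nonneg)

lemma pn_add: "pn (p + q) \<le> pn p + pn q"
proof -
  let ?N = "max (degree p) (degree q)"
  have "pn (p + q) = (\<Sum>k\<le>?N. cmod (coeff (p+q) k))"
    by (rule pn_ge) (simp add: degree_add_le)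
  also have "\<dots> \<le> (\<Sum>k\<le>?N. cmod (coeff p k) + cmod (coeff q k))"
    by (intro sum_mono) (simp add: norm_triangle_ineq)
  also have "\<dots> = pn p + pn q"
    by (simp add: sum.distrib pn_ge[of p ?N] pn_ge[of q ?N])
  finally show ?thesis .
qed

lemma pn_diff: "pn (p - q) \<le> pn p + pn q"
proof -
  let ?N = "max (degree p) (degree q)"
  have "pn (p - q) = (\<Sum>k\<le>?N. cmod (coeff (p-q) k))"
    by (rule pn_ge) (simp add: degree_diff_le)
  also have "\<dots> \<le> (\<Sum>k\<le>?N. cmod (coeff p k) + cmod (coeff q k))"
    by (intro sum_mono) (simp add: norm_triangle_ineq4)
  also have "\<dots> = pn p + pn q"
    by (simp add: sum.distrib pn_ge[of p ?N] pn_ge[of q ?N])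
  finally show ?thesis .
qed

lemma pn_smult: "pn (smult c p) = cmod c * pn p"
proof -
  have "pn (smult c p) = (\<Sum>k\<le>degree p. cmod (coeff (smult c p) k))"
    by (rule pn_ge) simp
  also have "\<dots> = cmod c * pn p"
    by (simp add: pn_def norm_mult sum_distrib_left)
  finally show ?thesis .
qed

lemma pn_pCons0: "pn (pCons 0 p) = pn p"
proof -
  have "pn (pCons 0 p) = (\<Sum>k\<le>Suc (degree p). cmod (coeff (pCons 0 p) k))"
    by (rule pn_ge) (simp add: degree_pCons_le)
  also have "\<dots> = pn p"
    by (simp add: sum.atMost_Suc_shift pn_def del: sum.atMost_Suc)
  finally show ?thesis .
qed

lemma poly_ge: fixes r :: "'a::{comm_semiring_0,semiring_1} poly" assumes "degree r \<le> N" shows "poly r x = (\<Sum>k\<le>N. coeff r k * x ^ k)"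
proof -
  have "(\<Sum>k\<le>degree r. coeff r k * x ^ k) = (\<Sum>k\<le>N. coeff r k * x ^ k)"
    by (rule sum.mono_neutral_left) (use assms in \<open>auto simp: coeff_eq_0\<close>)
  then show ?thesis by (simp add: poly_altdef)
qed

lemma sum_coeff_le_poly1:
  fixes r :: "real poly"
  assumes "\<And>k. coeff r k \<ge> 0"
  shows "(\<Sum>k\<le>N. coeff r k) \<le> poly r 1"
proof -
  have "(\<Sum>k\<le>N. coeff r k) \<le> (\<Sum>k\<le>max N (degree r). coeff r k)"
    by (rule sum_mono2) (auto simp: assms)
  also have "\<dots> = poly r 1" by (subst poly_ge[of r "max N (degree r)"]) auto
  finally show ?thesis .
qed

lemma pn_poly1: "pn p = poly (map_poly cmod p) 1"
proof -
  have d: "degree (map_poly cmod p) \<le> degree p" by (rule map_poly_degree_leq)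
  show ?thesis
    by (subst poly_ge[OF d]) (simp add: pn_def coeff_map_poly)
qed

lemma pn_mult: "pn (p * q) \<le> pn p * pn q"
proof -
  let ?r = "map_poly cmod p * map_poly cmod q"
  have "pn (p * q) = (\<Sum>k\<le>degree (p*q). cmod (coeff (p*q) k))" by (simp add: pn_def)
  also have "\<dots> \<le> (\<Sum>k\<le>degree (p*q). coeff ?r k)"
  proof (intro sum_mono)
    fix k
    have "cmod (coeff (p*q) k) = cmod (\<Sum>i\<le>k. coeff p i * coeff q (k - i))"
      by (simp add: coeff_mult)
    also have "\<dots> \<le> (\<Sum>i\<le>k. cmod (coeff p i) * cmod (coeff q (k - i)))"
      by (rule order_trans[OF norm_sum]) (simp add: norm_mult)
    also have "\<dots> = coeff ?r k" by (simp add: coeff_mult coeff_map_poly)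
    finally show "cmod (coeff (p*q) k) \<le> coeff ?r k" .
  qed
  also have "\<dots> \<le> poly ?r 1"
    by (rule sum_coeff_le_poly1) (auto simp: coeff_mult coeff_map_poly intro: sum_nonneg)
  also have "\<dots> = pn p * pn q" by (simp add: pn_poly1)
  finally show ?thesis .
qed

lemma pn_power: "pn (p ^ n) \<le> pn p ^ n"
proof (induction n)
  case 0
  then show ?case by (simp add: pn_def)
next
  case (Suc n)
  have "pn (p ^ Suc n) \<le> pn p * pn (p ^ n)" using pn_mult[of p "p^n"] by simp
  also have "\<dots> \<le> pn p * pn p ^ n" by (intro mult_left_mono Suc pn_nonneg)
  finally show ?case by simp
qed

lemma pn_pderiv: "pn (pderiv p) \<le> of_nat (degree p) * pn p"
proof -
  have "pn (pderiv p) = (\<Sum>k\<le>degree p. cmod (coeff (pderiv p) k))"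
    by (rule pn_ge) (simp add: degree_pderiv)
  also have "\<dots> \<le> (\<Sum>k\<le>degree p. of_nat (degree p) * cmod (coeff p (Suc k)))"
  proof (intro sum_mono)
    fix k assume k: "k \<in> {..degree p}"
    show "cmod (coeff (pderiv p) k) \<le> of_nat (degree p) * cmod (coeff p (Suc k))"
    proof (cases "Suc k \<le> degree p")
      case True
      have "cmod (of_nat (Suc k) :: complex) \<le> of_nat (degree p)"
        using True by (simp only: norm_of_nat)
      then show ?thesis by (simp only: coeff_pderiv norm_mult) (rule mult_right_mono, simp_all)
    next
      case False
      then show ?thesis by (simp add: coeff_pderiv coeff_eq_0)
    qed
  qed
  also have "\<dots> = of_nat (degree p) * (\<Sum>k\<le>degree p. cmod (coeff p (Suc k)))"
    by (simp add: sum_distrib_left)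
  also have "(\<Sum>k\<le>degree p. cmod (coeff p (Suc k))) \<le> (\<Sum>k\<le>Suc (degree p). cmod (coeff p k))"
    by (simp add: sum.atMost_Suc_shift del: sum.atMost_Suc)
  also have "\<dots> = pn p" by (rule pn_ge[symmetric]) simp
  finally show ?thesis by (simp add: mult_left_mono)
qed

lemma norm_poly_le_pn: "cmod t \<le> 1 \<Longrightarrow> cmod (poly p t) \<le> pn p"
  unfolding poly_altdef pn_def
  by (rule order_trans[OF norm_sum], rule sum_mono)
     (auto simp: norm_mult norm_power intro!: mult_left_le power_le_one)

lemma gkp_zero: "n < k \<Longrightarrow> gkp a b c a' b' c' n k = 0"
proof (induction n arbitrary: k)
  case 0 then show ?case by simp
next
  case (Suc n)
  then obtain j where "k = Suc j" by (cases k) auto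
  with Suc show ?case by simp
qed

fun Pp :: "complex \<Rightarrow> complex \<Rightarrow> nat \<Rightarrow> complex poly" where
  "Pp g0 gi 0 = 1"
| "Pp g0 gi (Suc n) = [:g0 - of_nat n / 2, of_nat n + gi:] * Pp g0 gi n
      + [:0, 1, -1:] * pderiv (Pp g0 gi n)"

lemma coeff_lin_mult: "coeff ([:a, b:] * p) (Suc j) = a * coeff p (Suc j) + b * coeff p j"
  "coeff ([:a, b:] * p) 0 = a * coeff p 0"
  by (simp_all add: mult_pCons_left)

lemma quad_eq: "[:0, 1, -1:] * (p :: complex poly) = pCons 0 (p - pCons 0 p)"
  by (simp add: mult_pCons_left smult_minus_left)

lemma coeff_quad_mult: "coeff ([:0, 1, -1:] * (p::complex poly)) (Suc j) = coeff p j - coeff (pCons 0 p) j"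
  "coeff ([:0, 1, -1:] * (p::complex poly)) 0 = 0"
  by (simp_all only: quad_eq coeff_pCons_0 coeff_pCons_Suc coeff_diff)

lemma coeff_Pp: "coeff (Pp g0 gi n) k = gkp (- 1/2) 1 g0 1 (- 1) gi n k"
proof (induction n arbitrary: k)
  case 0
  then show ?case by (simp add: coeff_1)
next
  case (Suc n)
  show ?case
  proof (cases k)
    case 0
    then show ?thesis using Suc by (simp add: coeff_lin_mult coeff_quad_mult del: mult_pCons_left)
  next
    case (Suc j)
    have "coeff (Pp g0 gi (Suc n)) (Suc j) =
       (g0 - of_nat n / 2) * coeff (Pp g0 gi n) (Suc j) + (of_nat n + gi) * coeff (Pp g0 gi n) j
       + (of_nat (Suc j) * coeff (Pp g0 gi n) (Suc j) - of_nat j * coeff (Pp g0 gi n) j)"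
      by (cases j) (simp_all add: coeff_lin_mult coeff_quad_mult coeff_pderiv del: mult_pCons_left)
    also have "\<dots> = gkp (- 1/2) 1 g0 1 (- 1) gi (Suc n) (Suc j)"
      by (simp add: Suc.IH algebra_simps)
    finally show ?thesis using Suc by simp
  qed
qed

lemma degree_Pp: "degree (Pp g0 gi n) \<le> n"
  by (rule degree_le) (simp add: coeff_Pp gkp_zero)

lemma pn_lin: "pn [:a, b:] \<le> cmod a + cmod b"
proof -
  have "pn [:a, b:] = (\<Sum>k\<le>1. cmod (coeff [:a,b:] k))" by (rule pn_ge) simp
  then show ?thesis by simp
qed

lemma pn_quad: "pn [:0, 1, -1::complex:] = 2"
proof -
  have "pn [:0, 1, -1::complex:] = (\<Sum>k\<le>2. cmod (coeff [:0, 1, -1::complex:] k))" by (rule pn_ge) simp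
  then show ?thesis by (simp add: numeral_2_eq_2)
qed

lemma pn_Pp: "pn (Pp g0 gi n) \<le> fact n * (cmod g0 + cmod gi + 4) ^ n"
proof (induction n)
  case 0
  then show ?case by (simp add: pn_def)
next
  case (Suc n)
  define K where "K = cmod g0 + cmod gi + 4"
  define P where "P = Pp g0 gi n"
  have K0: "K \<ge> 0" by (simp add: K_def)
  have a: "cmod (g0 - of_nat n / 2) \<le> cmod g0 + of_nat n"
  proof -
    have "cmod (g0 - of_nat n / 2) \<le> cmod g0 + cmod (of_nat n / 2 :: complex)" by (rule norm_triangle_ineq4)
    also have "cmod (of_nat n / 2 :: complex) = of_nat n / 2" by (simp add: norm_divide)
    finally show ?thesis by simp
  qed
  have b: "cmod (of_nat n + gi) \<le> of_nat n + cmod gi"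
    using norm_triangle_ineq[of "of_nat n :: complex" gi] by (simp add: norm_of_nat)
  have "pn (Pp g0 gi (Suc n)) \<le> pn [:g0 - of_nat n / 2, of_nat n + gi:] * pn P
       + pn [:0, 1, -1:] * pn (pderiv P)"
    unfolding P_def Pp.simps
    by (rule order_trans[OF pn_add], rule add_mono; rule pn_mult)
  also have "\<dots> \<le> (cmod g0 + of_nat n + (of_nat n + cmod gi)) * pn P + 2 * (of_nat n * pn P)"
  proof (rule add_mono)
    show "pn [:g0 - of_nat n / 2, of_nat n + gi:] * pn P \<le> (cmod g0 + of_nat n + (of_nat n + cmod gi)) * pn P"
      by (rule mult_right_mono[OF order_trans[OF pn_lin add_mono[OF a b]] pn_nonneg])
    have "pn (pderiv P) \<le> of_nat n * pn P"
      by (rule order_trans[OF pn_pderiv]) (auto intro!: mult_right_mono pn_nonneg simp: P_def degree_Pp)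
    then show "pn [:0, 1, -1:] * pn (pderiv P) \<le> 2 * (of_nat n * pn P)" by (simp add: pn_quad)
  qed
  also have "\<dots> = (cmod g0 + cmod gi + 4 * of_nat n) * pn P" by (simp add: algebra_simps)
  also have "\<dots> \<le> (of_nat (Suc n) * K) * pn P"
    by (rule mult_right_mono) (auto simp: K_def algebra_simps pn_nonneg)
  also have "\<dots> \<le> (of_nat (Suc n) * K) * (fact n * K ^ n)"
    using Suc.IH K0 by (intro mult_left_mono) (auto simp: P_def K_def)
  also have "\<dots> = fact (Suc n) * K ^ Suc n" by (simp add: algebra_simps)
  finally show ?case by (simp add: K_def)
qed

lemma pderiv_sum': "pderiv (sum f A) = (\<Sum>x\<in>A. pderiv (f x))"
  using higher_pderiv_sum[of 1 f A] by simp

definition qq :: "complex poly" where "qq = [:0, 1, -1:]"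

definition fM :: "complex poly fps \<Rightarrow> complex poly fps" where
  "fM f = Abs_fps (\<lambda>n. qq * pderiv (fps_nth f n))"

lemma fM_nth: "fps_nth (fM f) n = qq * pderiv (fps_nth f n)"
  by (simp add: fM_def)

lemma fM_add: "fM (f + g) = fM f + fM g"
  by (rule fps_ext) (simp add: fM_nth pderiv_add distrib_left)

lemma fM_diff: "fM (f - g) = fM f - fM g"
  by (rule fps_ext) (simp add: fM_nth pderiv_diff right_diff_distrib)

lemma fM_mult: "fM (f * g) = fM f * g + f * fM g"
  apply (rule fps_ext)
  apply (simp only: fps_add_nth fps_mult_nth fM_nth)
  apply (simp add: pderiv_sum' pderiv_mult sum_distrib_left sum.distrib[symmetric] algebra_simps)
  done

lemma fM_const: "fM (fps_const c) = fps_const (qq * pderiv c)"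
  by (rule fps_ext) (simp add: fM_nth)

lemma fM_deriv: "fM (fps_deriv f) = fps_deriv (fM f)"
  by (rule fps_ext) (simp add: fM_nth pderiv_mult pderiv_of_nat algebra_simps del: of_nat_Suc)

definition mm :: "complex poly fps" where "mm = 1 + fps_const [:1/2, -1:] * fps_X"

definition fL :: "complex poly fps \<Rightarrow> complex poly fps" where
  "fL f = mm * fps_deriv f - fM f"

lemma fps_deriv_mm: "fps_deriv mm = fps_const [:1/2, -1:]"
  by (simp add: mm_def)

lemma fL_add: "fL (f + g) = fL f + fL g"
  by (simp add: fL_def fM_add algebra_simps)

lemma fL_diff: "fL (f - g) = fL f - fL g"
  by (simp add: fL_def fM_diff algebra_simps)

lemma fL_mult: "fL (f * g) = fL f * g + f * fL g"
  by (simp add: fL_def fM_mult fps_deriv_mult algebra_simps)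

lemma fL_cmult: "fL (fps_const [:k:] * f) = fps_const [:k:] * fL f"
  by (simp only: fL_mult) (simp add: fL_def fM_const)

lemma fL_deriv: "fps_deriv (fL f) = fL (fps_deriv f) + fps_const [:1/2, -1:] * fps_deriv f"
  by (simp add: fL_def fps_deriv_mult fM_deriv fps_deriv_mm algebra_simps)

lemma fL_deriv_eig:
  assumes "fL f = fps_const a * f"
  shows "fL (fps_deriv f) = fps_const (a - [:1/2, -1:]) * fps_deriv f"
proof -
  have "fps_deriv (fL f) = fps_const a * fps_deriv f" using assms by simp
  then have e: "fps_const a * fps_deriv f = fL (fps_deriv f) + fps_const [:1/2, -1:] * fps_deriv f"
    using fL_deriv[of f] by simp
  have "fps_const (a - [:1/2, -1:]) * fps_deriv f = fps_const a * fps_deriv f - fps_const [:1/2, -1:] * fps_deriv f"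
    by (simp add: fps_eq_iff algebra_simps)
  then show ?thesis by (simp add: e)
qed

lemma fL_nth: "fps_nth (fL f) n = of_nat (Suc n) * fps_nth f (Suc n)
   + [:1/2, -1:] * of_nat n * fps_nth f n - qq * pderiv (fps_nth f n)"
  by (cases n) (simp_all add: fL_def mm_def fM_nth algebra_simps del: of_nat_Suc)

lemma fL_unique:
  assumes "fL W = fps_const k * W" "fps_nth W 0 = 0"
  shows "W = 0"
proof -
  have "fps_nth W n = 0" for n
  proof (induction n)
    case 0 then show ?case using assms by simp
  next
    case (Suc n)
    have "fps_nth (fL W) n = k * fps_nth W n" using assms(1) by simp
    with Suc have "(of_nat (Suc n) :: complex poly) * fps_nth W (Suc n) = 0"
      by (simp add: fL_nth del: of_nat_Suc)
    moreover have "(of_nat (Suc n) :: complex poly) \<noteq> 0" by (simp del: of_nat_Suc)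
    ultimately show ?case by simp
  qed
  then show ?thesis by (intro fps_ext) simp
qed

lemma pderiv_qq: "pderiv qq = [:1, -2:]"
  by (simp add: qq_def pderiv_pCons)

lemma qq_pderiv_pow: "qq * pderiv (qq ^ m) = smult (of_nat m) (qq ^ m * [:1, -2:])"
proof (cases m)
  case 0 then show ?thesis by simp
next
  case (Suc k)
  then show ?thesis by (simp only: pderiv_power_Suc pderiv_qq) (simp add: algebra_simps)
qed

lemma pderiv_lin_mult: "pderiv ([:a, b:] * X) = [:a, b:] * pderiv X + smult b X"
  by (simp only: pderiv_mult) (simp add: pderiv_pCons del: mult_pCons_left)

lemma qq_pderiv_lin_pow: "qq * pderiv ([:a, b:] * qq ^ m) =
   [:a, b:] * smult (of_nat m) (qq ^ m * [:1, -2:]) + smult b (qq ^ Suc m)"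
proof -
  have "qq * pderiv ([:a, b:] * qq ^ m) = [:a, b:] * (qq * pderiv (qq ^ m)) + smult b (qq ^ Suc m)"
    by (simp only: pderiv_lin_mult) (simp add: algebra_simps del: mult_pCons_left)
  then show ?thesis by (simp only: qq_pderiv_pow)
qed

definition Ac :: "nat \<Rightarrow> complex poly" where
  "Ac n = smult (of_real (cos_coeff n) / 2 ^ n) (qq ^ (n div 2))
        + smult (of_real (sin_coeff n) / 2 ^ n) ([:1, -1:] * qq ^ (n div 2))"

definition Bc :: "nat \<Rightarrow> complex poly" where
  "Bc n = smult (of_real (cos_coeff n) / 2 ^ n) (qq ^ (n div 2))
        - smult (of_real (sin_coeff n) / 2 ^ n) ([:0, 1:] * qq ^ (n div 2))"

lemma poly_qq: "poly qq x = x - x ^ 2"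
  by (simp add: qq_def power2_eq_square algebra_simps)

lemma Ac_eig: "of_nat (Suc n) * Ac (Suc n) + [:1/2, -1:] * of_nat n * Ac n - qq * pderiv (Ac n)
   = [:1/2, -1/2:] * Ac n"
proof -
  define m where "m = n div 2"
  have n: "n = 2 * m \<or> n = Suc (2 * m)" unfolding m_def by presburger
  then show ?thesis
  proof
    assume n: "n = 2 * m"
    define c where "c = cos_coeff n"
    have s0: "sin_coeff n = 0" using n by (simp add: sin_coeff_def)
    have d: "Suc n div 2 = m" "n div 2 = m" using n by auto
    have A0: "Ac n = smult (of_real c / 2 ^ n) (qq ^ m)" by (simp add: Ac_def s0 d c_def)
    have A1': "Ac (Suc n) = smult (of_real c / of_nat (Suc n) / 2 ^ Suc n) ([:1, -1:] * qq ^ m)"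
      by (simp add: Ac_def sin_coeff_Suc cos_coeff_Suc s0 d c_def del: of_nat_Suc mult_pCons_left)
    have A1: "of_nat (Suc n) * Ac (Suc n) = smult (of_real c / 2 ^ Suc n) ([:1, -1:] * qq ^ m)"
      unfolding A1' by (rule poly_eq_poly_eq_iff[THEN iffD1], rule ext) (simp del: of_nat_Suc)
    have D: "qq * pderiv (Ac n) = smult (of_real c / 2 ^ n) (smult (of_nat m) (qq ^ m * [:1, -2:]))"
      by (simp add: A0 pderiv_smult qq_pderiv_pow del: mult_pCons_left)
    show ?thesis
      unfolding D
      apply (unfold A0 A1)
      apply (rule poly_eq_poly_eq_iff[THEN iffD1])
      apply (rule ext)
      apply (simp add: n field_simps)
      done
  next
    assume n: "n = Suc (2 * m)"
    define s where "s = sin_coeff n"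
    have c0: "cos_coeff n = 0" using n by (simp add: cos_coeff_def)
    have d: "Suc n div 2 = Suc m" "n div 2 = m" using n by auto
    have A0: "Ac n = smult (of_real s / 2 ^ n) ([:1, -1:] * qq ^ m)" by (simp add: Ac_def c0 d s_def del: mult_pCons_left)
    have A1': "Ac (Suc n) = smult (- of_real s / of_nat (Suc n) / 2 ^ Suc n) (qq ^ Suc m)"
      by (simp add: Ac_def sin_coeff_Suc cos_coeff_Suc c0 d s_def del: of_nat_Suc mult_pCons_left)
    have A1: "of_nat (Suc n) * Ac (Suc n) = smult (- of_real s / 2 ^ Suc n) (qq ^ Suc m)"
      unfolding A1' by (rule poly_eq_poly_eq_iff[THEN iffD1], rule ext) (simp del: of_nat_Suc)
    have D: "qq * pderiv (Ac n) = smult (of_real s / 2 ^ n) ([:1, -1:] * smult (of_nat m) (qq ^ m * [:1, -2:]) + smult (-1) (qq ^ Suc m))"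
      by (simp add: A0 pderiv_smult qq_pderiv_lin_pow del: mult_pCons_left)
    show ?thesis
      unfolding D
      apply (unfold A0 A1)
      apply (rule poly_eq_poly_eq_iff[THEN iffD1])
      apply (rule ext)
      apply (simp add: n poly_qq field_simps power2_eq_square)
      done
  qed
qed

lemma Bc_eig: "of_nat (Suc n) * Bc (Suc n) + [:1/2, -1:] * of_nat n * Bc n - qq * pderiv (Bc n)
   = [:0, -1/2:] * Bc n"
proof -
  define m where "m = n div 2"
  have n: "n = 2 * m \<or> n = Suc (2 * m)" unfolding m_def by presburger
  then show ?thesis
  proof
    assume n: "n = 2 * m"
    define c where "c = cos_coeff n"
    have s0: "sin_coeff n = 0" using n by (simp add: sin_coeff_def)
    have d: "Suc n div 2 = m" "n div 2 = m" using n by auto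
    have A0: "Bc n = smult (of_real c / 2 ^ n) (qq ^ m)" by (simp add: Bc_def s0 d c_def)
    have A1': "Bc (Suc n) = smult (- of_real c / of_nat (Suc n) / 2 ^ Suc n) ([:0, 1:] * qq ^ m)"
      by (simp add: Bc_def sin_coeff_Suc cos_coeff_Suc s0 d c_def del: of_nat_Suc mult_pCons_left)
    have A1: "of_nat (Suc n) * Bc (Suc n) = smult (- of_real c / 2 ^ Suc n) ([:0, 1:] * qq ^ m)"
      unfolding A1' by (rule poly_eq_poly_eq_iff[THEN iffD1], rule ext) (simp del: of_nat_Suc)
    have D: "qq * pderiv (Bc n) = smult (of_real c / 2 ^ n) (smult (of_nat m) (qq ^ m * [:1, -2:]))"
      by (simp add: A0 pderiv_smult qq_pderiv_pow del: mult_pCons_left)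
    show ?thesis
      unfolding D
      apply (unfold A0 A1)
      apply (rule poly_eq_poly_eq_iff[THEN iffD1])
      apply (rule ext)
      apply (simp add: n field_simps)
      done
  next
    assume n: "n = Suc (2 * m)"
    define s where "s = sin_coeff n"
    have c0: "cos_coeff n = 0" using n by (simp add: cos_coeff_def)
    have d: "Suc n div 2 = Suc m" "n div 2 = m" using n by auto
    have A0: "Bc n = smult (- of_real s / 2 ^ n) ([:0, 1:] * qq ^ m)" by (simp add: Bc_def c0 d s_def del: mult_pCons_left)
    have A1': "Bc (Suc n) = smult (- of_real s / of_nat (Suc n) / 2 ^ Suc n) (qq ^ Suc m)"
      by (simp add: Bc_def sin_coeff_Suc cos_coeff_Suc c0 d s_def del: of_nat_Suc mult_pCons_left)
    have A1: "of_nat (Suc n) * Bc (Suc n) = smult (- of_real s / 2 ^ Suc n) (qq ^ Suc m)"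
      unfolding A1' by (rule poly_eq_poly_eq_iff[THEN iffD1], rule ext) (simp del: of_nat_Suc)
    have D: "qq * pderiv (Bc n) = smult (- of_real s / 2 ^ n) ([:0, 1:] * smult (of_nat m) (qq ^ m * [:1, -2:]) + smult 1 (qq ^ Suc m))"
      by (simp add: A0 pderiv_smult pderiv_minus qq_pderiv_lin_pow del: mult_pCons_left)
    show ?thesis
      unfolding D
      apply (unfold A0 A1)
      apply (rule poly_eq_poly_eq_iff[THEN iffD1])
      apply (rule ext)
      apply (simp add: n poly_qq field_simps power2_eq_square)
      done
  qed
qed

definition Af :: "complex poly fps" where "Af = Abs_fps Ac"
definition Bf :: "complex poly fps" where "Bf = Abs_fps Bc"
definition Pf :: "complex \<Rightarrow> complex \<Rightarrow> complex poly fps" where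
  "Pf g0 gi = Abs_fps (\<lambda>n. smult (1 / fact n) (Pp g0 gi n))"

lemma Af_eig: "fL Af = fps_const [:1/2, -1/2:] * Af"
  by (rule fps_ext) (simp add: fL_nth Af_def Ac_eig del: of_nat_Suc mult_pCons_left)

lemma Bf_eig: "fL Bf = fps_const [:0, -1/2:] * Bf"
  by (rule fps_ext) (simp add: fL_nth Bf_def Bc_eig del: of_nat_Suc mult_pCons_left)

lemma Pp_eig: "Pp g0 gi (Suc n) + [:1/2, -1:] * of_nat n * Pp g0 gi n - qq * pderiv (Pp g0 gi n)
   = [:g0, gi:] * Pp g0 gi n"
  unfolding Pp.simps qq_def
  apply (rule poly_eq_poly_eq_iff[THEN iffD1])
  apply (rule ext)
  apply (simp add: algebra_simps)
  done

lemma Pf_eig: "fL (Pf g0 gi) = fps_const [:g0, gi:] * Pf g0 gi"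
proof (rule fps_ext)
  fix n
  have e1: "of_nat (Suc n) * smult (1 / fact (Suc n)) X = smult (1 / fact n) X" for X :: "complex poly"
    apply (rule poly_eq_poly_eq_iff[THEN iffD1])
    apply (rule ext)
    apply (simp add: field_simps del: of_nat_Suc)
    done
  have "fps_nth (fL (Pf g0 gi)) n = smult (1 / fact n) (Pp g0 gi (Suc n) + [:1/2, -1:] * of_nat n * Pp g0 gi n - qq * pderiv (Pp g0 gi n))"
    unfolding fL_nth Pf_def fps_nth_Abs_fps e1 pderiv_smult
    apply (rule poly_eq_poly_eq_iff[THEN iffD1])
    apply (rule ext)
    apply (simp add: algebra_simps del: Pp.simps)
    done
  also have "\<dots> = fps_nth (fps_const [:g0, gi:] * Pf g0 gi) n"
    unfolding Pp_eig by (simp add: Pf_def del: mult_pCons_left)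
  finally show "fps_nth (fL (Pf g0 gi)) n = fps_nth (fps_const [:g0, gi:] * Pf g0 gi) n" .
qed

lemma fL_const0: "fL (fps_const [:k:]) = 0"
  by (simp add: fL_def fM_const)

definition Wf :: "complex \<Rightarrow> complex \<Rightarrow> complex \<Rightarrow> complex poly fps" where
  "Wf g0 gi g1 = Af * Bf * fps_deriv (Pf g0 gi)
     - (fps_const [:2 * g0:] * fps_deriv Af * Bf + fps_const [:2 * g1:] * Af * fps_deriv Bf) * Pf g0 gi"

lemma Wf_eig: "fL (Wf g0 gi g1) = fps_const ([:1/2, -1/2:] + [:0, -1/2:] + [:g0, gi:] - [:1/2, -1:]) * Wf g0 gi g1"
proof -
  note eA = fL_deriv_eig[OF Af_eig] and eB = fL_deriv_eig[OF Bf_eig] and eP = fL_deriv_eig[OF Pf_eig]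
  show ?thesis
    unfolding Wf_def
    apply (simp only: fL_diff fL_add fL_mult fL_const0 eA eB eP Af_eig Bf_eig Pf_eig fps_const_add[symmetric] fps_const_sub[symmetric])
    apply algebra
    done
qed

lemma Wf_0: "Wf g0 gi (- g0 - gi) = 0"
proof (rule fL_unique[OF Wf_eig])
  have "Pp g0 gi 1 = [:g0, gi:]" by (simp add: numeral_2_eq_2)
  then show "fps_nth (Wf g0 gi (- g0 - gi)) 0 = 0"
    by (simp add: Wf_def Af_def Bf_def Pf_def Ac_def Bc_def cos_coeff_def sin_coeff_def) (simp add: field_simps)
qed

lemma DS:
  fixes p :: "nat \<Rightarrow> complex poly" and t z :: complex
  assumes t: "cmod t \<le> 1" and S: "summable (\<lambda>n. pn (p n) * cmod z ^ n)"
  shows "((\<lambda>(n, k). coeff (p n) k * t ^ k * z ^ n) has_sum (\<Sum>n. poly (p n) t * z ^ n)) UNIV"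
proof -
  define f where "f = (\<lambda>(n, k). coeff (p n) k * t ^ k * z ^ n)"
  define g where "g = (\<lambda>n. poly (p n) t * z ^ n)"
  have row: "((\<lambda>k. f (n, k)) has_sum g n) UNIV" for n
  proof (rule has_sum_finite_neutralI[of "{..degree (p n)}"])
    show "g n = (\<Sum>k\<in>{..degree (p n)}. f (n, k))"
      by (simp add: g_def f_def poly_altdef sum_distrib_right)
  qed (auto simp: f_def coeff_eq_0)
  have rown: "((\<lambda>k. norm (f (n, k))) has_sum (\<Sum>k\<in>{..degree (p n)}. norm (f (n, k)))) UNIV" for n
    by (rule has_sum_finite_neutralI[of "{..degree (p n)}"]) (auto simp: f_def coeff_eq_0)
  have rowb: "(\<Sum>k\<in>{..degree (p n)}. norm (f (n, k))) \<le> pn (p n) * cmod z ^ n" for n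
  proof -
    have "(\<Sum>k\<in>{..degree (p n)}. norm (f (n, k))) \<le> (\<Sum>k\<in>{..degree (p n)}. cmod (coeff (p n) k) * cmod z ^ n)"
      by (intro sum_mono) (auto simp: f_def norm_mult norm_power intro!: mult_right_mono mult_left_le power_le_one t)
    also have "\<dots> = pn (p n) * cmod z ^ n" by (simp add: pn_def sum_distrib_right)
    finally show ?thesis .
  qed
  have Ssum: "(\<lambda>n. pn (p n) * cmod z ^ n) summable_on UNIV"
    using S by (subst summable_on_UNIV_nonneg_real_iff) (auto intro!: mult_nonneg_nonneg pn_nonneg)
  have "(\<lambda>x. norm (f x)) summable_on Sigma UNIV (\<lambda>_. UNIV)"
  proof (rule Infinite_Sum.abs_summable_on_Sigma_iff[THEN iffD2], intro conjI ballI)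
    fix n :: nat
    show "(\<lambda>k. norm (f (n, k))) summable_on UNIV" using rown[of n] by (auto simp: summable_on_def)
  next
    have "(\<lambda>n. infsum (\<lambda>k. norm (f (n, k))) UNIV) summable_on UNIV"
    proof (rule summable_on_comparison_test[OF Ssum])
      fix n :: nat
      show "infsum (\<lambda>k. norm (f (n, k))) UNIV \<le> pn (p n) * cmod z ^ n"
        using rowb[of n] infsumI[OF rown[of n]] by simp
      show "0 \<le> infsum (\<lambda>k. norm (f (n, k))) UNIV" by (rule infsum_nonneg) simp
    qed
    then show "(\<lambda>n. norm (infsum (\<lambda>k. norm (f (n, k))) UNIV)) summable_on UNIV"
      by (simp add: infsum_nonneg)
  qed
  then have summ: "f summable_on Sigma UNIV (\<lambda>_. UNIV)" by (rule abs_summable_summable)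
  have gn: "summable (\<lambda>n. norm (g n))"
  proof (rule summable_comparison_test[OF _ S])
    show "\<exists>N. \<forall>n\<ge>N. norm (norm (g n)) \<le> pn (p n) * cmod z ^ n"
      by (auto simp: g_def norm_mult norm_power intro!: mult_right_mono norm_poly_le_pn t)
  qed
  have "(g has_sum (\<Sum>n. g n)) UNIV"
    by (rule norm_summable_imp_has_sum[OF gn]) (rule summable_sums[OF summable_norm_cancel[OF gn]])
  then have "(f has_sum (\<Sum>n. g n)) (Sigma UNIV (\<lambda>_. UNIV))"
    by (intro has_sum_SigmaI[OF row _ summ])
  then show ?thesis by (simp add: f_def g_def)
qed

definition evt :: "complex \<Rightarrow> complex poly fps \<Rightarrow> complex fps" where
  "evt t f = Abs_fps (\<lambda>n. poly (fps_nth f n) t)"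

lemma evt_nth [simp]: "fps_nth (evt t f) n = poly (fps_nth f n) t"
  by (simp add: evt_def)

lemma evt_add: "evt t (f + g) = evt t f + evt t g"
  by (rule fps_ext) simp
lemma evt_diff: "evt t (f - g) = evt t f - evt t g"
  by (rule fps_ext) simp
lemma evt_mult: "evt t (f * g) = evt t f * evt t g"
  by (rule fps_ext) (simp add: fps_mult_nth poly_sum)
lemma evt_const: "evt t (fps_const c) = fps_const (poly c t)"
  by (rule fps_ext) (simp add: fps_const_def)
lemma evt_deriv: "evt t (fps_deriv f) = fps_deriv (evt t f)"
  by (rule fps_ext) (simp del: of_nat_Suc)

lemma evt_W:
  "evt t Af * evt t Bf * fps_deriv (evt t (Pf g0 gi)) =
   (fps_const (2 * g0) * fps_deriv (evt t Af) * evt t Bf + fps_const (2 * (- g0 - gi)) * evt t Af * fps_deriv (evt t Bf))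
    * evt t (Pf g0 gi)"
proof -
  have "evt t (Wf g0 gi (- g0 - gi)) = 0" by (simp add: Wf_0 evt_def fps_zero_def)
  then show ?thesis
    unfolding Wf_def evt_diff evt_add evt_mult evt_deriv evt_const by simp
qed

lemma abs_cos_coeff: "\<bar>cos_coeff n\<bar> \<le> 1"
  by (auto simp: cos_coeff_def)
lemma abs_sin_coeff: "\<bar>sin_coeff n\<bar> \<le> 1"
  by (auto simp: sin_coeff_def)

lemma pn_qq: "pn qq = 2" by (simp add: qq_def pn_quad)

lemma pn_lin2: "pn [:a, b:] \<le> 2" if "cmod a \<le> 1" "cmod b \<le> 1"
  using pn_lin[of a b] that by simp

lemma pn_Ac_Bc_aux:
  assumes "pn L \<le> 2" and that: "\<bar>c\<bar> \<le> 1" "\<bar>s\<bar> \<le> 1"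
  shows "pn (smult (of_real c / 2 ^ n) (qq ^ (n div 2)) + smult (of_real s / 2 ^ n) (L * qq ^ (n div 2))) \<le> 3"
    "pn (smult (of_real c / 2 ^ n) (qq ^ (n div 2)) - smult (of_real s / 2 ^ n) (L * qq ^ (n div 2))) \<le> 3"
proof -
  define k where "k = n div 2"
  have p1: "pn (qq ^ k) \<le> 2 ^ k" using pn_power[of qq k] by (simp add: pn_qq)
  have p2: "pn (L * qq ^ k) \<le> 2 * 2 ^ k"
    by (rule order_trans[OF pn_mult]) (rule mult_mono[OF assms(1) p1], auto simp: pn_nonneg)
  have k: "(2::real) ^ k \<le> 2 ^ n" by (rule power_increasing) (auto simp: k_def)
  have c: "cmod (of_real c / 2 ^ n :: complex) \<le> 1 / 2 ^ n"
    using that by (simp add: norm_divide norm_power divide_right_mono)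
  have s: "cmod (of_real s / 2 ^ n :: complex) \<le> 1 / 2 ^ n"
    using that by (simp add: norm_divide norm_power divide_right_mono)
  have "cmod (of_real c / 2 ^ n :: complex) * pn (qq ^ k) + cmod (of_real s / 2 ^ n :: complex) * pn (L * qq ^ k)
     \<le> 1 / 2 ^ n * 2 ^ k + 1 / 2 ^ n * (2 * 2 ^ k)"
    by (intro add_mono mult_mono c s p1 p2) (auto simp: pn_nonneg)
  also have "\<dots> = 3 * (2 ^ k / 2 ^ n)" by (simp add: field_simps)
  also have "\<dots> \<le> 3 * 1" using k by (intro mult_left_mono) auto
  finally have main: "cmod (of_real c / 2 ^ n :: complex) * pn (qq ^ k) + cmod (of_real s / 2 ^ n :: complex) * pn (L * qq ^ k) \<le> 3" by simp
  show "pn (smult (of_real c / 2 ^ n) (qq ^ (n div 2)) + smult (of_real s / 2 ^ n) (L * qq ^ (n div 2))) \<le> 3"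
    by (rule order_trans[OF pn_add]) (use main in \<open>simp add: pn_smult k_def\<close>)
  show "pn (smult (of_real c / 2 ^ n) (qq ^ (n div 2)) - smult (of_real s / 2 ^ n) (L * qq ^ (n div 2))) \<le> 3"
    by (rule order_trans[OF pn_diff]) (use main in \<open>simp add: pn_smult k_def\<close>)
qed

lemma pn_Ac: "pn (Ac n) \<le> 3"
  unfolding Ac_def by (rule pn_Ac_Bc_aux(1)) (auto intro: pn_lin2 abs_cos_coeff abs_sin_coeff)

lemma pn_Bc: "pn (Bc n) \<le> 3"
  unfolding Bc_def by (rule pn_Ac_Bc_aux(2)) (auto intro: pn_lin2 abs_cos_coeff abs_sin_coeff)

lemma pn_Pf: "pn (fps_nth (Pf g0 gi) n) \<le> (cmod g0 + cmod gi + 4) ^ n"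
proof -
  have "pn (fps_nth (Pf g0 gi) n) = pn (Pp g0 gi n) / fact n"
    by (simp add: Pf_def pn_smult norm_divide)
  also have "\<dots> \<le> fact n * (cmod g0 + cmod gi + 4) ^ n / fact n"
    by (intro divide_right_mono pn_Pp) auto
  finally show ?thesis by simp
qed

lemma pn_sum: "pn (sum f A) \<le> (\<Sum>x\<in>A. pn (f x))"
proof (induction A rule: infinite_finite_induct)
  case (infinite A) then show ?case by (simp add: pn_def)
next
  case empty then show ?case by (simp add: pn_def)
next
  case (insert x F)
  then show ?case using pn_add[of "f x" "sum f F"] by simp
qed

lemma pn_AA: assumes that: "\<And>n. pn (fps_nth F n) \<le> 3"
  shows "pn (fps_nth (F * F) n) \<le> 9 * 2 ^ n"
proof -
  have "pn (fps_nth (F * F) n) \<le> (\<Sum>i=0..n. pn (fps_nth F i * fps_nth F (n - i)))"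
    unfolding fps_mult_nth by (rule pn_sum)
  also have "\<dots> \<le> (\<Sum>i=0..n. 9)"
    by (intro sum_mono order_trans[OF pn_mult]) (rule order_trans[OF mult_mono[OF that that]], auto simp: pn_nonneg)
  also have "\<dots> = 9 * (of_nat n + 1)" by simp
  also have "\<dots> \<le> 9 * 2 ^ n" proof -
    have "real n + 1 \<le> 2 ^ n" proof (induction n) case 0 then show ?case by simp
      next case (Suc n) then show ?case by simp qed
    then show ?thesis by simp
  qed
  finally show ?thesis .
qed

lemma w_sq: "gkp_w t z ^ 2 = z ^ 2 / 4 * (t - t ^ 2)"
proof -
  have "gkp_w t z ^ 2 = (z / 2) ^ 2 * (csqrt t ^ 2 * csqrt (1 - t) ^ 2)"
    by (simp only: gkp_w_def power_mult_distrib)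
  also have "\<dots> = z ^ 2 / 4 * (t - t ^ 2)"
    by (simp only: power2_csqrt) (simp add: field_simps power2_eq_square)
  finally show ?thesis .
qed

lemma A_term:
  assumes "t \<noteq> 0"
  shows "poly (Ac n) t * z ^ n = cos_coeff n *\<^sub>R gkp_w t z ^ n
           + csqrt (1 - t) / csqrt t * (sin_coeff n *\<^sub>R gkp_w t z ^ n)"
proof -
  define w where "w = gkp_w t z"
  define k where "k = n div 2"
  have u: "csqrt t \<noteq> 0" using assms by simp
  have vw: "csqrt (1 - t) / csqrt t * w = z / 2 * (1 - t)"
    using u by (simp add: w_def gkp_w_def field_simps power2_csqrt[of "1-t", unfolded power2_eq_square])
  have w2k: "w ^ (2 * k) = z ^ (2 * k) / 2 ^ (2 * k) * (t - t ^ 2) ^ k"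
    by (simp add: power_mult w_def w_sq power_mult_distrib power_divide)
  have n: "n = 2 * k \<or> n = Suc (2 * k)" unfolding k_def by presburger
  then show ?thesis
  proof
    assume n: "n = 2 * k"
    have s0: "sin_coeff n = 0" using n by (simp add: sin_coeff_def)
    have wn: "w ^ n = z ^ n / 2 ^ n * (t - t ^ 2) ^ k" using n w2k by simp
    have p: "poly (Ac n) t = of_real (cos_coeff n) / 2 ^ n * (t - t ^ 2) ^ k"
      by (simp add: Ac_def s0 poly_qq k_def)
    show ?thesis unfolding w_def[symmetric] p
      by (simp add: s0 wn scaleR_conv_of_real field_simps)
  next
    assume n: "n = Suc (2 * k)"
    have c0: "cos_coeff n = 0" using n by (simp add: cos_coeff_def)
    have "csqrt (1 - t) / csqrt t * (sin_coeff n *\<^sub>R w ^ n) = of_real (sin_coeff n) * (csqrt (1 - t) / csqrt t * w) * w ^ (2 * k)"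
      using n by (simp add: scaleR_conv_of_real)
    also have "\<dots> = of_real (sin_coeff n) * (z / 2 * (1 - t)) * (z ^ (2 * k) / 2 ^ (2 * k) * (t - t ^ 2) ^ k)"
      by (simp only: vw w2k)
    finally have e: "csqrt (1 - t) / csqrt t * (sin_coeff n *\<^sub>R w ^ n) = of_real (sin_coeff n) * (z / 2 * (1 - t)) * (z ^ (2 * k) / 2 ^ (2 * k) * (t - t ^ 2) ^ k)" .
    have p: "poly (Ac n) t = of_real (sin_coeff n) / 2 ^ n * ((1 - t) * (t - t ^ 2) ^ k)"
      by (simp add: Ac_def c0 poly_qq k_def algebra_simps)
    have zn: "z ^ n = z * z ^ (2 * k)" "(2::complex) ^ n = 2 * 2 ^ (2 * k)" using n by simp_all
    show ?thesis unfolding w_def[symmetric] e p zn by (simp add: c0 field_simps)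
  qed
qed

lemma B_term:
  assumes "t \<noteq> 1"
  shows "poly (Bc n) t * z ^ n = cos_coeff n *\<^sub>R gkp_w t z ^ n
           - csqrt t / csqrt (1 - t) * (sin_coeff n *\<^sub>R gkp_w t z ^ n)"
proof -
  define w where "w = gkp_w t z"
  define k where "k = n div 2"
  have u: "csqrt (1 - t) \<noteq> 0" using assms by simp
  have vw: "csqrt t / csqrt (1 - t) * w = z / 2 * t"
    using u by (simp add: w_def gkp_w_def field_simps power2_csqrt[of "t", unfolded power2_eq_square])
  have w2k: "w ^ (2 * k) = z ^ (2 * k) / 2 ^ (2 * k) * (t - t ^ 2) ^ k"
    by (simp add: power_mult w_def w_sq power_mult_distrib power_divide)
  have n: "n = 2 * k \<or> n = Suc (2 * k)" unfolding k_def by presburger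
  then show ?thesis
  proof
    assume n: "n = 2 * k"
    have s0: "sin_coeff n = 0" using n by (simp add: sin_coeff_def)
    have wn: "w ^ n = z ^ n / 2 ^ n * (t - t ^ 2) ^ k" using n w2k by simp
    have p: "poly (Bc n) t = of_real (cos_coeff n) / 2 ^ n * (t - t ^ 2) ^ k"
      by (simp add: Bc_def s0 poly_qq k_def)
    show ?thesis unfolding w_def[symmetric] p
      by (simp add: s0 wn scaleR_conv_of_real field_simps)
  next
    assume n: "n = Suc (2 * k)"
    have c0: "cos_coeff n = 0" using n by (simp add: cos_coeff_def)
    have "csqrt t / csqrt (1 - t) * (sin_coeff n *\<^sub>R w ^ n) = of_real (sin_coeff n) * (csqrt t / csqrt (1 - t) * w) * w ^ (2 * k)"
      using n by (simp add: scaleR_conv_of_real)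
    also have "\<dots> = of_real (sin_coeff n) * (z / 2 * t) * (z ^ (2 * k) / 2 ^ (2 * k) * (t - t ^ 2) ^ k)"
      by (simp only: vw w2k)
    finally have e: "csqrt t / csqrt (1 - t) * (sin_coeff n *\<^sub>R w ^ n) = of_real (sin_coeff n) * (z / 2 * t) * (z ^ (2 * k) / 2 ^ (2 * k) * (t - t ^ 2) ^ k)" .
    have p: "poly (Bc n) t = - of_real (sin_coeff n) / 2 ^ n * (t * (t - t ^ 2) ^ k)"
      by (simp add: Bc_def c0 poly_qq k_def)
    have zn: "z ^ n = z * z ^ (2 * k)" "(2::complex) ^ n = 2 * 2 ^ (2 * k)" using n by simp_all
    show ?thesis unfolding w_def[symmetric] e p zn by (simp add: c0 field_simps)
  qed
qed

lemma A_sums: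
  assumes "t \<noteq> 0"
  shows "(\<lambda>n. poly (Ac n) t * z ^ n) sums (cos (gkp_w t z) + csqrt (1 - t) / csqrt t * sin (gkp_w t z))"
  unfolding A_term[OF assms]
  by (intro sums_add cos_converges sums_mult sin_converges)

lemma B_sums:
  assumes "t \<noteq> 1"
  shows "(\<lambda>n. poly (Bc n) t * z ^ n) sums (cos (gkp_w t z) - csqrt t / csqrt (1 - t) * sin (gkp_w t z))"
  unfolding B_term[OF assms]
  by (intro sums_diff cos_converges sums_mult sin_converges)

lemma conv_rad:
  fixes f :: "complex fps"
  assumes B: "\<And>n. norm (fps_nth f n) \<le> C * R ^ n" and R: "R > 0"
  shows "ereal (1 / R) \<le> fps_conv_radius f"
  unfolding fps_conv_radius_def
proof (rule conv_radius_geI_ex')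
  fix r :: real assume r: "0 < r" "ereal r < ereal (1 / R)"
  then have rR: "R * r < 1" using R by (simp add: field_simps)
  have g: "summable (\<lambda>n. C * (R * r) ^ n)"
    using rR R r by (intro summable_mult summable_geometric) auto
  show "summable (\<lambda>n. fps_nth f n * of_real r ^ n)"
  proof (rule summable_norm_cancel, rule summable_comparison_test[OF _ g])
    show "\<exists>N. \<forall>n\<ge>N. norm (norm (fps_nth f n * of_real r ^ n)) \<le> C * (R * r) ^ n"
      using r B by (auto simp: norm_mult norm_power power_mult_distrib intro!: mult_right_mono)
  qed
qed

lemma tail_bound:
  fixes f :: "complex fps"
  assumes B: "\<And>n. norm (fps_nth f n) \<le> 3" and z: "norm z < 1"
  shows "norm (eval_fps f z - fps_nth f 0) \<le> 3 * norm z / (1 - norm z)"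
proof -
  have "ereal (1 / 1) \<le> fps_conv_radius f" by (rule conv_rad[of _ 3]) (use B in auto)
  then have r1: "ereal 1 \<le> fps_conv_radius f" by simp
  have "ereal (norm z) < fps_conv_radius f" by (rule less_le_trans[OF _ r1]) (use z in simp)
  then have "norm z < fps_conv_radius f" by simp
  then have "(\<lambda>n. fps_nth f n * z ^ n) sums eval_fps f z" by (rule sums_eval_fps)
  then have s: "(\<lambda>n. fps_nth f (Suc n) * z ^ Suc n) sums (eval_fps f z - fps_nth f 0)"
    by (subst sums_Suc_iff) simp
  have g: "(\<lambda>n. (3 * norm z) * norm z ^ n) sums ((3 * norm z) * (1 / (1 - norm z)))"
    using z by (intro sums_mult geometric_sums) auto
  have "norm (eval_fps f z - fps_nth f 0) = norm (\<Sum>n. fps_nth f (Suc n) * z ^ Suc n)"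
    using sums_unique[OF s] by simp
  also have "\<dots> \<le> (\<Sum>n. (3 * norm z) * norm z ^ n)"
  proof (rule norm_suminf_le)
    show "summable (\<lambda>n. (3 * norm z) * norm z ^ n)" using g by (rule sums_summable)
    fix n
    show "norm (fps_nth f (Suc n) * z ^ Suc n) \<le> 3 * norm z * norm z ^ n"
      using B[of "Suc n"] by (simp add: norm_mult norm_power mult.assoc mult_right_mono)
  qed
  also have "\<dots> = 3 * norm z / (1 - norm z)" using sums_unique[OF g] by simp
  finally show ?thesis .
qed

lemma sq_good:
  fixes a :: complex
  assumes "norm (a - 1) \<le> 1 / 6"
  shows "a * a \<notin> \<real>\<^sub>\<le>\<^sub>0" "a \<noteq> 0"
proof -
  define e where "e = a - 1"
  have e: "norm e \<le> 1/6" using assms by (simp add: e_def)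
  have aa: "a * a = 1 + 2 * e + e * e" by (simp add: e_def algebra_simps)
  have r1: "Re (2 * e) \<ge> - 2 * norm e" using abs_Re_le_cmod[of e] by simp
  have r2: "Re (e * e) \<ge> - (norm e * norm e)" using abs_Re_le_cmod[of "e*e"] by (simp add: norm_mult)
  have "norm e * norm e \<le> 1/6 * (1/6)" using e by (intro mult_mono) auto
  then have "Re (a * a) > 0" using r1 r2 e unfolding aa by simp
  then show "a * a \<notin> \<real>\<^sub>\<le>\<^sub>0" by (simp add: complex_nonpos_Reals_iff)
  show "a \<noteq> 0" using e by (auto simp: e_def)
qed

lemma ode_unique:
  fixes a b h a' b' h' :: "complex \<Rightarrow> complex" and \<rho> :: real and g0 g1 :: complex
  assumes da: "\<And>z. z \<in> ball 0 \<rho> \<Longrightarrow> (a has_field_derivative a' z) (at z)"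
      and db: "\<And>z. z \<in> ball 0 \<rho> \<Longrightarrow> (b has_field_derivative b' z) (at z)"
      and dh: "\<And>z. z \<in> ball 0 \<rho> \<Longrightarrow> (h has_field_derivative h' z) (at z)"
      and ode: "\<And>z. z \<in> ball 0 \<rho> \<Longrightarrow> a z * b z * h' z = (2 * g0 * a' z * b z + 2 * g1 * a z * b' z) * h z"
      and na: "\<And>z. z \<in> ball 0 \<rho> \<Longrightarrow> norm (a z - 1) \<le> 1 / 6"
      and nb: "\<And>z. z \<in> ball 0 \<rho> \<Longrightarrow> norm (b z - 1) \<le> 1 / 6"
      and init: "a 0 = 1" "b 0 = 1" "h 0 = 1" and \<rho>: "\<rho> > 0"
  shows "\<And>z. z \<in> ball 0 \<rho> \<Longrightarrow> h z = (a z ^ 2) powr g0 * (b z ^ 2) powr g1"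
proof -
  define \<Phi> where "\<Phi> z = g0 * Ln (a z * a z) + g1 * Ln (b z * b z)" for z
  define \<Phi>' where "\<Phi>' z = g0 * (inverse (a z * a z) * (a' z * a z + a' z * a z))
                        + g1 * (inverse (b z * b z) * (b' z * b z + b' z * b z))" for z
  define K where "K z = h z * exp (- \<Phi> z)" for z
  have dPhi: "(\<Phi> has_field_derivative \<Phi>' z) (at z)" if z: "z \<in> ball 0 \<rho>" for z
  proof -
    have la: "((\<lambda>z. Ln (a z * a z)) has_field_derivative inverse (a z * a z) * (a' z * a z + a' z * a z)) (at z)"
      by (rule DERIV_chain2[OF has_field_derivative_Ln[OF sq_good(1)[OF na[OF z]]] DERIV_mult[OF da[OF z] da[OF z]]])
    have lb: "((\<lambda>z. Ln (b z * b z)) has_field_derivative inverse (b z * b z) * (b' z * b z + b' z * b z)) (at z)"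
      by (rule DERIV_chain2[OF has_field_derivative_Ln[OF sq_good(1)[OF nb[OF z]]] DERIV_mult[OF db[OF z] db[OF z]]])
    show ?thesis unfolding \<Phi>_def[abs_def] \<Phi>'_def
      by (intro DERIV_add DERIV_cmult la lb)
  qed
  have hd: "h' z = h z * \<Phi>' z" if z: "z \<in> ball 0 \<rho>" for z
  proof -
    have a0: "a z \<noteq> 0" by (rule sq_good(2)[OF na[OF z]])
    have b0: "b z \<noteq> 0" by (rule sq_good(2)[OF nb[OF z]])
    have "h' z = (2 * g0 * a' z * b z + 2 * g1 * a z * b' z) * h z / (a z * b z)"
      using ode[OF z] a0 b0 by (simp add: field_simps)
    also have "\<dots> = h z * \<Phi>' z" using a0 b0 by (simp add: \<Phi>'_def field_simps)
    finally show ?thesis .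
  qed
  have dK: "(K has_field_derivative 0) (at z within ball 0 \<rho>)" if z: "z \<in> ball 0 \<rho>" for z
  proof -
    have "(K has_field_derivative h' z * exp (- \<Phi> z) + exp (- \<Phi> z) * (- \<Phi>' z) * h z) (at z)"
      unfolding K_def[abs_def]
      by (intro DERIV_mult dh[OF z] DERIV_chain2[OF DERIV_exp] DERIV_minus dPhi[OF z])
    also have "h' z * exp (- \<Phi> z) + exp (- \<Phi> z) * (- \<Phi>' z) * h z = 0"
      by (simp add: hd[OF z] algebra_simps)
    finally show ?thesis by (rule has_field_derivative_at_within)
  qed
  obtain c where c: "\<And>z. z \<in> ball 0 \<rho> \<Longrightarrow> K z = c"
    using has_field_derivative_zero_constant[OF convex_ball dK] by blast
  have "K 0 = 1" by (simp add: K_def \<Phi>_def init)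
  then have c1: "c = 1" using c[of 0] \<rho> by simp
  fix z :: complex assume z: "z \<in> ball 0 \<rho>"
  have a0: "a z \<noteq> 0" by (rule sq_good(2)[OF na[OF z]])
  have b0: "b z \<noteq> 0" by (rule sq_good(2)[OF nb[OF z]])
  have "h z * exp (- \<Phi> z) = 1" using c[OF z] c1 by (simp add: K_def)
  then have "h z = exp (\<Phi> z)" by (simp add: exp_minus field_simps)
  also have "\<dots> = (a z ^ 2) powr g0 * (b z ^ 2) powr g1"
    using a0 b0 by (simp add: \<Phi>_def powr_def exp_add power2_eq_square mult.commute)
  finally show "h z = (a z ^ 2) powr g0 * (b z ^ 2) powr g1" .
qed

lemma ereal_lt: "ereal a \<le> R \<Longrightarrow> x < a \<Longrightarrow> ereal x < R"
  by (rule less_le_trans[of _ "ereal a"]) simp_all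

lemma ereal_min_lt: "(x::ereal) < A \<Longrightarrow> x < B \<Longrightarrow> min A B \<le> C \<Longrightarrow> x < C"
  by (rule less_le_trans[of _ "min A B"]) simp_all

lemma rad_mult: fixes f g :: "complex fps"
  shows "norm w < fps_conv_radius f \<Longrightarrow> norm w < fps_conv_radius g \<Longrightarrow> norm w < fps_conv_radius (f * g)"
  using fps_conv_radius_mult[of f g] by (rule ereal_min_lt[rotated 2])
lemma rad_add: fixes f g :: "complex fps"
  shows "norm w < fps_conv_radius f \<Longrightarrow> norm w < fps_conv_radius g \<Longrightarrow> norm w < fps_conv_radius (f + g)"
  using fps_conv_radius_add[of f g] by (rule ereal_min_lt[rotated 2])
lemma rad_deriv: fixes f :: "complex fps"
  shows "norm w < fps_conv_radius f \<Longrightarrow> norm w < fps_conv_radius (fps_deriv f)"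
  using fps_conv_radius_deriv[of f] by (auto intro: less_le_trans)

lemma Af_nth [simp]: "fps_nth Af n = Ac n" by (simp add: Af_def)
lemma Bf_nth [simp]: "fps_nth Bf n = Bc n" by (simp add: Bf_def)

lemma evA_nth [simp]: "fps_nth (evt t Af) n = poly (Ac n) t" by (simp add: Af_def)
lemma evB_nth [simp]: "fps_nth (evt t Bf) n = poly (Bc n) t" by (simp add: Bf_def)

lemma Ac0: "Ac 0 = 1" by (simp add: Ac_def cos_coeff_def sin_coeff_def)
lemma Bc0: "Bc 0 = 1" by (simp add: Bc_def cos_coeff_def sin_coeff_def)

lemma boundA: "cmod t \<le> 1 \<Longrightarrow> norm (fps_nth (evt t Af) n) \<le> 3"
  using norm_poly_le_pn[of t "Ac n"] pn_Ac[of n] by simp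
lemma boundB: "cmod t \<le> 1 \<Longrightarrow> norm (fps_nth (evt t Bf) n) \<le> 3"
  using norm_poly_le_pn[of t "Bc n"] pn_Bc[of n] by simp

lemma radAB:
  assumes "cmod t \<le> 1" "norm (w::complex) < 1"
  shows "norm w < fps_conv_radius (evt t Af)" "norm w < fps_conv_radius (evt t Bf)"
proof -
  have "ereal (1 / 1) \<le> fps_conv_radius (evt t Af)" by (rule conv_rad[of _ 3]) (use boundA assms in auto)
  then show "norm w < fps_conv_radius (evt t Af)" using assms(2) by (intro ereal_lt[of 1]) simp_all
  have "ereal (1 / 1) \<le> fps_conv_radius (evt t Bf)" by (rule conv_rad[of _ 3]) (use boundB assms in auto)
  then show "norm w < fps_conv_radius (evt t Bf)" using assms(2) by (intro ereal_lt[of 1]) simp_all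
qed

lemma boundP: "cmod t \<le> 1 \<Longrightarrow> norm (fps_nth (evt t (Pf g0 gi)) n) \<le> 1 * (cmod g0 + cmod gi + 4) ^ n"
  using norm_poly_le_pn[of t "fps_nth (Pf g0 gi) n"] pn_Pf[of g0 gi n] by simp

lemma radP:
  assumes "cmod t \<le> 1" "norm (w::complex) < 1 / (cmod g0 + cmod gi + 4)"
  shows "norm w < fps_conv_radius (evt t (Pf g0 gi))"
proof -
  have "ereal (1 / (cmod g0 + cmod gi + 4)) \<le> fps_conv_radius (evt t (Pf g0 gi))"
    by (rule conv_rad[OF boundP[OF assms(1)]]) (auto intro: add_nonneg_pos)
  then show ?thesis using assms(2) by (rule ereal_lt)
qed

lemma near1:
  assumes "cmod t \<le> 1" "norm (w::complex) < 1 / 20"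
  shows "norm (eval_fps (evt t Af) w - 1) \<le> 1 / 6" "norm (eval_fps (evt t Bf) w - 1) \<le> 1 / 6"
proof -
  have w1: "norm w < 1" using assms by simp
  have b: "3 * norm w / (1 - norm w) \<le> 1 / 6"
    using assms(2) by (simp add: field_simps)
  show "norm (eval_fps (evt t Af) w - 1) \<le> 1 / 6"
    by (rule order_trans[OF _ b]) (use tail_bound[of "evt t Af" w, OF boundA[OF assms(1)] w1] in \<open>simp add: Ac0\<close>)
  show "norm (eval_fps (evt t Bf) w - 1) \<le> 1 / 6"
    by (rule order_trans[OF _ b]) (use tail_bound[of "evt t Bf" w, OF boundB[OF assms(1)] w1] in \<open>simp add: Bc0\<close>)
qed

lemma main_identity:
  fixes g0 gi t :: complex
  defines "K \<equiv> cmod g0 + cmod gi + 4"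
  assumes t: "cmod t \<le> 1" and z: "norm z < 1 / (20 * K)"
  shows "eval_fps (evt t (Pf g0 gi)) z =
     (eval_fps (evt t Af) z ^ 2) powr g0 * (eval_fps (evt t Bf) z ^ 2) powr (- g0 - gi)"
proof -
  have K: "K \<ge> 4" by (simp add: K_def)
  define \<rho> where "\<rho> = 1 / (20 * K)"
  have \<rho>: "\<rho> > 0" "\<rho> \<le> 1 / 20" "\<rho> \<le> 1 / K" using K by (auto simp: \<rho>_def field_simps)
  define A where "A = evt t Af"
  define B where "B = evt t Bf"
  define P where "P = evt t (Pf g0 gi)"
  have rads: "norm w < fps_conv_radius A" "norm w < fps_conv_radius B" "norm w < fps_conv_radius P"
    if w: "w \<in> ball 0 \<rho>" for w :: complex
  proof -
    have w': "norm w < \<rho>" using w by simp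
    have w1: "norm w < 1" using w' \<rho> by simp
    show "norm w < fps_conv_radius A" unfolding A_def by (rule radAB(1)[OF t w1])
    show "norm w < fps_conv_radius B" unfolding B_def by (rule radAB(2)[OF t w1])
    show "norm w < fps_conv_radius P" unfolding P_def
      by (rule radP[OF t]) (use w' \<rho> in \<open>simp add: K_def\<close>)
  qed
  have "eval_fps P w = (eval_fps A w ^ 2) powr g0 * (eval_fps B w ^ 2) powr (- g0 - gi)"
    if w: "w \<in> ball 0 \<rho>" for w :: complex
  proof (rule ode_unique[OF _ _ _ _ _ _ _ _ _ \<rho>(1) w])
    fix z :: complex assume z: "z \<in> ball 0 \<rho>"
    note r = rads[OF z]
    show "(eval_fps A has_field_derivative eval_fps (fps_deriv A) z) (at z)"
      by (rule has_field_derivative_eval_fps[OF r(1)])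
    show "(eval_fps B has_field_derivative eval_fps (fps_deriv B) z) (at z)"
      by (rule has_field_derivative_eval_fps[OF r(2)])
    show "(eval_fps P has_field_derivative eval_fps (fps_deriv P) z) (at z)"
      by (rule has_field_derivative_eval_fps[OF r(3)])
    have zz: "norm z < 1 / 20" using z \<rho> by simp
    show "norm (eval_fps A z - 1) \<le> 1 / 6" unfolding A_def by (rule near1(1)[OF t zz])
    show "norm (eval_fps B z - 1) \<le> 1 / 6" unfolding B_def by (rule near1(2)[OF t zz])
    note rd = rad_deriv[OF r(1)] rad_deriv[OF r(2)] rad_deriv[OF r(3)]
    have W: "A * B * fps_deriv P = (fps_const (2 * g0) * fps_deriv A * B + fps_const (2 * (- g0 - gi)) * A * fps_deriv B) * P"
      unfolding A_def B_def P_def by (rule evt_W)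
    have rc: "norm z < fps_conv_radius (fps_const c)" for c :: complex by simp
    have "eval_fps A z * eval_fps B z * eval_fps (fps_deriv P) z = eval_fps (A * B * fps_deriv P) z"
      by (simp add: eval_fps_mult r rd rad_mult)
    also have "\<dots> = eval_fps ((fps_const (2 * g0) * fps_deriv A * B + fps_const (2 * (- g0 - gi)) * A * fps_deriv B) * P) z"
      by (simp only: W)
    also have "\<dots> = (2 * g0 * eval_fps (fps_deriv A) z * eval_fps B z + 2 * (- g0 - gi) * eval_fps A z * eval_fps (fps_deriv B) z) * eval_fps P z"
      by (simp add: eval_fps_mult eval_fps_add r rd rc rad_mult rad_add)
    finally show "eval_fps A z * eval_fps B z * eval_fps (fps_deriv P) z =
       (2 * g0 * eval_fps (fps_deriv A) z * eval_fps B z + 2 * (- g0 - gi) * eval_fps A z * eval_fps (fps_deriv B) z) * eval_fps P z" .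
  next
    show "eval_fps A 0 = 1" "eval_fps B 0 = 1" "eval_fps P 0 = 1"
      by (simp_all add: eval_fps_at_0 A_def B_def P_def Ac0 Bc0 Pf_def)
  qed
  moreover have "z \<in> ball 0 \<rho>" using z by (simp add: \<rho>_def)
  ultimately show ?thesis by (simp add: A_def B_def P_def)
qed

lemma s_sum: "s_plus t z + s_minus t z = 1"
proof -
  define u where "u = csqrt t"
  define v where "v = csqrt (1 - t)"
  define c where "c = cos (gkp_w t z)"
  define s where "s = sin (gkp_w t z)"
  have "s_plus t z + s_minus t z = (u ^ 2 + v ^ 2) * (s ^ 2 + c ^ 2)"
    unfolding s_plus_def s_minus_def u_def[symmetric] v_def[symmetric] c_def[symmetric] s_def[symmetric]
    by (simp add: power2_eq_square algebra_simps)
  also have "\<dots> = 1" by (simp add: u_def v_def s_def c_def sin_cos_squared_add)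
  finally show ?thesis .
qed

lemma eval_sq:
  fixes F :: "complex poly fps"
  assumes "cmod t \<le> 1" "norm z < fps_conv_radius (evt t F)"
  shows "(\<Sum>n. poly (fps_nth (F * F) n) t * z ^ n) = eval_fps (evt t F) z ^ 2"
proof -
  have "(\<Sum>n. poly (fps_nth (F * F) n) t * z ^ n) = eval_fps (evt t (F * F)) z"
    by (simp add: eval_fps_def)
  also have "\<dots> = eval_fps (evt t F) z ^ 2"
    by (simp add: evt_mult eval_fps_mult assms power2_eq_square)
  finally show ?thesis .
qed

lemma ana_sq:
  fixes F :: "complex poly fps"
  assumes B: "\<And>n. pn (fps_nth F n) \<le> 3"
    and R: "\<And>t z. cmod t \<le> 1 \<Longrightarrow> cmod z < (1::real) \<Longrightarrow> ereal (cmod z) < fps_conv_radius (evt t F)"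
  shows "analytic2_at (\<lambda>t z. eval_fps (evt t F) z ^ 2) 0 0"
  unfolding analytic2_at_def
proof (intro exI[of _ "1/4"] conjI exI[of _ "\<lambda>n k. coeff (fps_nth (F * F) n) k"] allI impI)
  fix t z :: complex
  assume tz: "cmod (t - 0) < 1/4 \<and> cmod (z - 0) < 1/4"
  then have t: "cmod t \<le> 1" and z: "cmod z < 1/4" by auto
  have S: "summable (\<lambda>n. pn (fps_nth (F * F) n) * cmod z ^ n)"
  proof (rule summable_comparison_test[OF _ summable_mult[OF summable_geometric[of "2 * cmod z"]]])
    show "norm (2 * cmod z) < 1" using z by simp
    show "\<exists>N. \<forall>n\<ge>N. norm (pn (fps_nth (F * F) n) * cmod z ^ n) \<le> 9 * (2 * cmod z) ^ n"
      using pn_AA[OF B] by (auto simp: pn_nonneg power_mult_distrib mult.assoc[symmetric] intro!: mult_right_mono)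
  qed
  have "((\<lambda>(n, k). coeff (fps_nth (F * F) n) k * t ^ k * z ^ n) has_sum eval_fps (evt t F) z ^ 2) UNIV"
  proof -
    have zr: "norm z < fps_conv_radius (evt t F)" by (rule R[OF t]) (use z in simp)
    show ?thesis using DS[OF t S] eval_sq[OF t zr] by simp
  qed
  then show "((\<lambda>(n, k). coeff (fps_nth (F * F) n) k * (t - 0) ^ k * (z - 0) ^ n) has_sum eval_fps (evt t F) z ^ 2) UNIV"
    by simp
qed simp

lemma Qp_eq:
  assumes t: "t \<noteq> 0"
  shows "eval_fps (evt t Af) z ^ 2 = s_plus t z / t"
proof -
  define u where "u = csqrt t"
  define v where "v = csqrt (1 - t)"
  define c where "c = cos (gkp_w t z)"
  define s where "s = sin (gkp_w t z)"
  have u0: "u \<noteq> 0" using t by (simp add: u_def)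
  have e: "eval_fps (evt t Af) z = c + v / u * s"
    using sums_unique[OF A_sums[OF t, of z]] by (simp add: eval_fps_def u_def v_def c_def s_def)
  have "u * c + v * s = u * (c + v / u * s)" using u0 by (simp add: field_simps)
  then have "s_plus t z = u ^ 2 * (c + v / u * s) ^ 2"
    unfolding s_plus_def u_def[symmetric] v_def[symmetric] c_def[symmetric] s_def[symmetric]
    by (simp add: power_mult_distrib)
  also have "\<dots> = t * (c + v / u * s) ^ 2" by (simp add: u_def)
  finally show ?thesis using t by (simp add: e)
qed

lemma Qm_eq:
  assumes t: "1 - t \<noteq> 0"
  shows "eval_fps (evt t Bf) z ^ 2 = s_minus t z / (1 - t)"
proof -
  define u where "u = csqrt t"
  define v where "v = csqrt (1 - t)"
  define c where "c = cos (gkp_w t z)"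
  define s where "s = sin (gkp_w t z)"
  have t1: "t \<noteq> 1" using t by simp
  have v0: "v \<noteq> 0" using t by (simp add: v_def)
  have e: "eval_fps (evt t Bf) z = c - u / v * s"
    using sums_unique[OF B_sums[OF t1, of z]] by (simp add: eval_fps_def u_def v_def c_def s_def)
  have "v * c - u * s = v * (c - u / v * s)" using v0 by (simp add: field_simps)
  then have "s_minus t z = v ^ 2 * (c - u / v * s) ^ 2"
    unfolding s_minus_def u_def[symmetric] v_def[symmetric] c_def[symmetric] s_def[symmetric]
    by (simp add: power_mult_distrib)
  also have "\<dots> = (1 - t) * (c - u / v * s) ^ 2" by (simp add: v_def)
  finally show ?thesis using t by (simp add: e)
qed

theorem mainTheorem6:
  fixes g0 ginf :: complex
  defines "g1 \<equiv> - g0 - ginf"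
  defines "T \<equiv> gkp (- 1/2) 1 g0 1 (- 1) ginf"
  shows "(\<forall>t z. s_plus t z + s_minus t z = 1)
    \<and> (\<exists>Qp Qm.
         analytic2_at Qp 0 0 \<and> analytic2_at Qm 0 0
       \<and> (\<forall>t z. t \<noteq> 0 \<longrightarrow> Qp t z = s_plus t z / t)
       \<and> (\<forall>t z. 1 - t \<noteq> 0 \<longrightarrow> Qm t z = s_minus t z / (1 - t))
       \<and> (\<forall>t. Qp t 0 = 1 \<and> Qm t 0 = 1)
       \<and> (\<exists>r>0. \<forall>t z. cmod t < r \<and> cmod z < r \<longrightarrow>
            ((\<lambda>(n, k). T n k * t ^ k * z ^ n / of_nat (fact n)) has_sum
               (Qp t z powr g0 * Qm t z powr g1)) UNIV))"
proof -
  define Qp where "Qp = (\<lambda>t z. eval_fps (evt t Af) z ^ 2)"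
  define Qm where "Qm = (\<lambda>t z. eval_fps (evt t Bf) z ^ 2)"
  define K where "K = cmod g0 + cmod ginf + 4"
  have K: "K \<ge> 4" by (simp add: K_def)
  define r where "r = 1 / (20 * K)"
  have r: "r > 0" "r \<le> 1" using K by (auto simp: r_def field_simps)
  have aP: "analytic2_at Qp 0 0" unfolding Qp_def
  proof (rule ana_sq)
    fix n show "pn (fps_nth Af n) \<le> 3" using pn_Ac by simp
  next
    fix t z :: complex assume "cmod t \<le> 1" "cmod z < (1::real)"
    then show "ereal (cmod z) < fps_conv_radius (evt t Af)" by (rule radAB(1))
  qed
  have aM: "analytic2_at Qm 0 0" unfolding Qm_def
  proof (rule ana_sq)
    fix n show "pn (fps_nth Bf n) \<le> 3" using pn_Bc by simp
  next
    fix t z :: complex assume "cmod t \<le> 1" "cmod z < (1::real)"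
    then show "ereal (cmod z) < fps_conv_radius (evt t Bf)" by (rule radAB(2))
  qed
  have eqP: "\<forall>t z. t \<noteq> 0 \<longrightarrow> Qp t z = s_plus t z / t" by (simp add: Qp_def Qp_eq)
  have eqM: "\<forall>t z. 1 - t \<noteq> 0 \<longrightarrow> Qm t z = s_minus t z / (1 - t)" by (simp add: Qm_def Qm_eq)
  have at0: "\<forall>t. Qp t 0 = 1 \<and> Qm t 0 = 1" by (simp add: Qp_def Qm_def eval_fps_at_0 Ac0 Bc0)
  have main: "\<forall>t z. cmod t < r \<and> cmod z < r \<longrightarrow>
            ((\<lambda>(n, k). T n k * t ^ k * z ^ n / of_nat (fact n)) has_sum
               (Qp t z powr g0 * Qm t z powr g1)) UNIV"
  proof (intro allI impI)
    fix t z :: complex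
    assume tz: "cmod t < r \<and> cmod z < r"
    then have t: "cmod t \<le> 1" using r by simp
    have zK: "cmod z < 1 / (20 * K)" using tz by (simp add: r_def)
    have Kz: "K * cmod z < 1" using zK K by (simp add: field_simps)
    have S: "summable (\<lambda>n. pn (fps_nth (Pf g0 ginf) n) * cmod z ^ n)"
    proof (rule summable_comparison_test[OF _ summable_geometric[of "K * cmod z"]])
      show "norm (K * cmod z) < 1" using Kz K by simp
      show "\<exists>N. \<forall>n\<ge>N. norm (pn (fps_nth (Pf g0 ginf) n) * cmod z ^ n) \<le> (K * cmod z) ^ n"
        using pn_Pf[of g0 ginf] by (auto simp: pn_nonneg power_mult_distrib K_def intro!: mult_right_mono)
    qed
    have f: "(\<lambda>(n, k). T n k * t ^ k * z ^ n / of_nat (fact n)) =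
             (\<lambda>(n, k). coeff (fps_nth (Pf g0 ginf) n) k * t ^ k * z ^ n)"
      by (auto simp: T_def Pf_def coeff_Pp field_simps)
    have "(\<Sum>n. poly (fps_nth (Pf g0 ginf) n) t * z ^ n) = eval_fps (evt t (Pf g0 ginf)) z"
      by (simp add: eval_fps_def)
    also have "\<dots> = Qp t z powr g0 * Qm t z powr g1"
      using main_identity[OF t, of z g0 ginf] zK by (simp add: Qp_def Qm_def g1_def K_def)
    finally show "((\<lambda>(n, k). T n k * t ^ k * z ^ n / of_nat (fact n)) has_sum
               (Qp t z powr g0 * Qm t z powr g1)) UNIV"
      unfolding f using DS[OF t S] by simp
  qed
  show ?thesis
    using s_sum aP aM eqP eqM at0 main r(1) by blast
qed

end
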